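(* Let $(P,\leq,{}',0,1)$ be a generalized orthomodular poset and define $R(x,y):=LU(x',y)$ for all $x,y\in P$. Then $(P,\leq,{}',R,0,1)$ is a conditionally operator residuated poset satisfying operator divisibility. Explicitly, for all $x,y,z\in P$: (i) if $x'\leq y$ and $L(x,y)\subseteq L(z)$ then $L(x)\subseteq R(y,z)$; (ii) if $z\leq y$ and $L(x)\subseteq R(y,z)$ then $L(x,y)\subseteq L(z)$; (iii) $R(x,0)=L(x')$; (iv) $R(x'',x)=P$; and moreover $x\leq y$ implies $L(y,U(R(y,x)))=L(x)$.
   Context: For a poset $(P,\leq)$ and $A\subseteq P$: $L(A):=\{x\in P\mid x\leq a\text{ for all }a\in A\}$, $U(A):=\{x\in P\mid a\leq x\text{ for all }a\in A\}$. We write $L(a,b)$ for $L(\{a,b\})$, $L(a,B)$ for $L(\{a\}\cup B)$, $LU(A)$ for $L(U(A))$, $ULU(A)=U(L(U(A)))$, etc.; for $A\subseteq P$, $A':=\{x'\mid x\in A\}$. An orthoposet is a bounded poset $(P,\leq,{}',0,1)$ with a unary operation $'$ that is an antitone involution ($x''=x$, and $x\leq y\Rightarrow y'\leq x'$) and a complementation ($L(x,x')=\{0\}$, $U(x,x')=\{1\}$). A generalized orthomodular poset is an orthoposet satisfying: for all $x,y\in P$, $x\leq y$ implies $U(y)=U(x,L(x',y))$. A conditionally operator residuated poset is a tuple $(P,\leq,{}',R,0,1)$ where $(P,\leq,0,1)$ is a bounded poset, $'$ is an antitone unary operation, and $R:P^2\to 2^P$ satisfies (i)–(iv) above; it satisfies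 operator divisibility if $x\leq y$ implies $L(y,U(R(y,x)))=L(x)$. *)

theory Defs
  imports Main
begin

text \<open>Posets are modelled as types of class order; the whole type is the carrier P.\<close>

definition Lo :: "'a::order set \<Rightarrow> 'a set" where
  "Lo A = {x. \<forall>a\<in>A. x \<le> a}"

definition Uo :: "'a::order set \<Rightarrow> 'a set" where
  "Uo A = {x. \<forall>a\<in>A. a \<le> x}"

definition bounded_poset :: "'a::order \<Rightarrow> 'a \<Rightarrow> bool" where
  "bounded_poset z o1 \<longleftrightarrow> (\<forall>x. z \<le> x \<and> x \<le> o1)"

definition orthoposet :: "('a::order \<Rightarrow> 'a) \<Rightarrow> 'a \<Rightarrow> 'a \<Rightarrow> bool" where
  "orthoposet c z o1 \<longleftrightarrow> bounded_poset z o1 \<and>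
     (\<forall>x. c (c x) = x) \<and> (\<forall>x y. x \<le> y \<longrightarrow> c y \<le> c x) \<and>
     (\<forall>x. Lo {x, c x} = {z} \<and> Uo {x, c x} = {o1})"

definition generalized_orthomodular_poset :: "('a::order \<Rightarrow> 'a) \<Rightarrow> 'a \<Rightarrow> 'a \<Rightarrow> bool" where
  "generalized_orthomodular_poset c z o1 \<longleftrightarrow> orthoposet c z o1 \<and>
     (\<forall>x y. x \<le> y \<longrightarrow> Uo {y} = Uo ({x} \<union> Lo {c x, y}))"

definition cond_operator_residuated_poset ::
  "('a::order \<Rightarrow> 'a) \<Rightarrow> ('a \<Rightarrow> 'a \<Rightarrow> 'a set) \<Rightarrow> 'a \<Rightarrow> 'a \<Rightarrow> bool" where
  "cond_operator_residuated_poset c R z o1 \<longleftrightarrow> bounded_poset z o1 \<and>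
     (\<forall>x y. x \<le> y \<longrightarrow> c y \<le> c x) \<and>
     (\<forall>x y w. c x \<le> y \<and> Lo {x, y} \<subseteq> Lo {w} \<longrightarrow> Lo {x} \<subseteq> R y w) \<and>
     (\<forall>x y w. w \<le> y \<and> Lo {x} \<subseteq> R y w \<longrightarrow> Lo {x, y} \<subseteq> Lo {w}) \<and>
     (\<forall>x. R x z = Lo {c x}) \<and>
     (\<forall>x. R (c (c x)) x = UNIV)"

definition operator_divisibility ::
  "('a::order \<Rightarrow> 'a \<Rightarrow> 'a set) \<Rightarrow> bool" where
  "operator_divisibility R \<longleftrightarrow>
     (\<forall>x y. x \<le> y \<longrightarrow> Lo ({y} \<union> Uo (R y x)) = Lo {x})"

end

theory Submission
  imports Defs
begin

lemma LU_UL: "Uo (Lo (Uo A)) = Uo (A::'a::order set)"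
  unfolding Lo_def Uo_def by auto

lemma dual_gom:
  fixes c :: "'a::order \<Rightarrow> 'a"
  assumes g: "generalized_orthomodular_poset c z o1" and xy: "x \<le> y"
      and t: "t \<le> y" and tu: "\<forall>u. c y \<le> u \<and> x \<le> u \<longrightarrow> t \<le> u"
  shows "t \<le> x"
proof -
  have inv: "\<And>a. c (c a) = a" and anti: "\<And>a b. a \<le> b \<Longrightarrow> c b \<le> c a"
   and gom: "\<And>a b. a \<le> b \<Longrightarrow> Uo {b} = Uo ({a} \<union> Lo {c a, b})"
    using g unfolding generalized_orthomodular_poset_def orthoposet_def by auto
  have "c y \<le> c x" using anti xy .
  hence eq: "Uo {c x} = Uo ({c y} \<union> Lo {y, c x})" using gom[of "c y" "c x"] inv by simp
  have "c t \<in> Uo ({c y} \<union> Lo {y, c x})"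
  proof -
    have "c y \<le> c t" using anti t .
    moreover have "s \<le> c t" if "s \<le> y" "s \<le> c x" for s
    proof -
      have "c y \<le> c s" "x \<le> c s" using anti[OF that(1)] anti[OF that(2)] inv by auto
      hence "t \<le> c s" using tu by blast
      hence "c (c s) \<le> c t" using anti by blast
      thus ?thesis using inv by simp
    qed
    ultimately show ?thesis unfolding Uo_def Lo_def by auto
  qed
  hence "c t \<in> Uo {c x}" using eq by simp
  hence "c x \<le> c t" unfolding Uo_def by simp
  hence "c (c t) \<le> c (c x)" using anti by blast
  thus ?thesis using inv by simp
qed

theorem mainTheorem1:
  fixes c :: "'a::order \<Rightarrow> 'a" and z o1 :: 'a
  assumes "generalized_orthomodular_poset c z o1"
  shows "cond_operator_residuated_poset c (\<lambda>x y. Lo (Uo {c x, y})) z o1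
         \<and> operator_divisibility (\<lambda>x y. Lo (Uo {c x, y}))"
proof -
  note g = assms
  have bp: "bounded_poset z o1" and inv: "\<And>a. c (c a) = a" and anti: "\<And>a b. a \<le> b \<Longrightarrow> c b \<le> c a"
   and gom: "\<And>a b. a \<le> b \<Longrightarrow> Uo {b} = Uo ({a} \<union> Lo {c a, b})"
   and cU: "\<And>a. Uo {a, c a} = {o1}"
    using g unfolding generalized_orthomodular_poset_def orthoposet_def by auto
  have bnd: "\<And>a. z \<le> a \<and> a \<le> o1" using bp unfolding bounded_poset_def by auto
  have i: "Lo {x} \<subseteq> Lo (Uo {c y, w})" if h: "c x \<le> y" "Lo {x, y} \<subseteq> Lo {w}" for x y w
  proof
    fix t assume "t \<in> Lo {x}"
    hence tx: "t \<le> x" unfolding Lo_def by simp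
    have yx: "c y \<le> x" using anti[OF h(1)] inv by simp
    have eq: "Uo {x} = Uo ({c y} \<union> Lo {y, x})" using gom[OF yx] inv by simp
    have "Uo {c y, w} \<subseteq> Uo {x}"
    proof
      fix u assume u: "u \<in> Uo {c y, w}"
      have "u \<in> Uo ({c y} \<union> Lo {y, x})"
      proof -
        have "s \<le> u" if "s \<in> Lo {y, x}" for s
        proof -
          have "s \<in> Lo {w}" using that h(2) by (auto simp: Lo_def)
          thus ?thesis using u by (auto simp: Lo_def Uo_def intro: order_trans)
        qed
        thus ?thesis using u by (auto simp: Uo_def)
      qed
      thus "u \<in> Uo {x}" using eq by simp
    qed
    thus "t \<in> Lo (Uo {c y, w})" using tx by (auto simp: Lo_def Uo_def intro: order_trans)
  qed
  have div: "Lo ({y} \<union> Uo (Lo (Uo {c y, x}))) = Lo {x}" if xy: "x \<le> y" for x y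
  proof
    show "Lo ({y} \<union> Uo (Lo (Uo {c y, x}))) \<subseteq> Lo {x}"
    proof
      fix t assume "t \<in> Lo ({y} \<union> Uo (Lo (Uo {c y, x})))"
      hence "t \<in> Lo ({y} \<union> Uo {c y, x})" using LU_UL by metis
      hence "t \<le> y" "\<forall>u. c y \<le> u \<and> x \<le> u \<longrightarrow> t \<le> u" by (auto simp: Lo_def Uo_def)
      hence "t \<le> x" using dual_gom[OF g xy] by blast
      thus "t \<in> Lo {x}" by (simp add: Lo_def)
    qed
  next
    show "Lo {x} \<subseteq> Lo ({y} \<union> Uo (Lo (Uo {c y, x})))"
      using xy LU_UL[of "{c y, x}"] by (auto simp: Lo_def Uo_def intro: order_trans)
  qed
  have ii: "Lo {x, y} \<subseteq> Lo {w}" if h: "w \<le> y" "Lo {x} \<subseteq> Lo (Uo {c y, w})" for x y w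
  proof
    fix t assume "t \<in> Lo {x, y}"
    hence tx: "t \<le> x" and ty: "t \<le> y" by (auto simp: Lo_def)
    have "t \<in> Lo (Uo {c y, w})" using h(2) tx by (auto simp: Lo_def)
    hence "t \<in> Lo ({y} \<union> Uo (Lo (Uo {c y, w})))" using ty LU_UL[of "{c y, w}"]
      by (auto simp: Lo_def)
    thus "t \<in> Lo {w}" using div[OF h(1)] by simp
  qed
  have iii: "Lo (Uo {c x, z}) = Lo {c x}" for x
  proof -
    have "Uo {c x, z} = Uo {c x}" using bnd by (auto simp: Uo_def)
    thus ?thesis by (auto simp: Lo_def Uo_def)
  qed
  have iv: "Lo (Uo {c (c (c x)), x}) = UNIV" for x
    using cU[of x] inv bnd by (auto simp: Lo_def insert_commute)
  show ?thesis
    unfolding cond_operator_residuated_poset_def operator_divisibility_def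
    using bp anti i ii iii iv div by auto
qed

end
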